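(* For every integer $n \geq 3$, the line graph $L(K_n)$ of the complete graph $K_n$ satisfies $c_V(L(K_n)) = 2(n-2)$, $c_E(L(K_n)) \geq n(n-2)/3$, and $c_{E,\mathrm{r}}(L(K_n)) \geq n^2/12$.
   Context: The line graph $L(G)$ has the edges of $G$ as vertices, two being adjacent iff they share an endpoint. Games: players alternate turns, cops first; initially the cop player places all cops, then the robber is placed on a vertex (several pieces may share a position). In a turn each piece of the moving player may stay or make one move (no obligation to move). The robber sits on vertices and moves to adjacent vertices; $v_r$ is his current vertex. Vertex version: cops on vertices moving to adjacent vertices; cops win when every neighbor of $v_r$ is occupied by a cop; $c_V(G)$ is the least number of cops forcing a win in finitely many turns. Edge version: cops sit on edges; a cop on edge $e$ may move to any edge sharing an endpoint with $e$; cops win when every edge incident to $v_r$ is occupied; number $c_E(G)$. Restrictive edge version: as the edge version, but the robber may not move along an edge currently occupied by a cop; number $c_{E,\mathrm{r}}(G)$. *)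

theory Defs
  imports Complex_Main
begin

(* A graph is given by a vertex set V and an adjacency relation adj
   (assumed symmetric and irreflexive on V). *)

definition graph_edges :: "'a set \<Rightarrow> ('a \<Rightarrow> 'a \<Rightarrow> bool) \<Rightarrow> 'a set set" where
  "graph_edges V adj = {{u, v} | u v. u \<in> V \<and> v \<in> V \<and> adj u v}"

definition Kn_verts :: "nat \<Rightarrow> nat set" where
  "Kn_verts n = {..<n}"

definition Kn_adj :: "nat \<Rightarrow> nat \<Rightarrow> bool" where
  "Kn_adj u v = (u \<noteq> v)"

definition line_verts :: "'a set \<Rightarrow> ('a \<Rightarrow> 'a \<Rightarrow> bool) \<Rightarrow> 'a set set" where
  "line_verts V adj = graph_edges V adj"

definition line_adj :: "'a set \<Rightarrow> 'a set \<Rightarrow> bool" where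
  "line_adj e f = (e \<noteq> f \<and> e \<inter> f \<noteq> {})"

(* Cop positions of type 'c, robber positions of type 'a.
   cstep x y : a single cop may move from x to y (staying is always allowed).
   rstep C r r' : robber at r may move to r' when cops are at C (staying always allowed).
   capt C r : the cops have won.
   cops_force t C r : cops can force a win in finitely many turns from the
   position (cops at C, robber at r), t = True iff it is the cops' turn. *)
inductive cops_force ::
  "('c \<Rightarrow> 'c \<Rightarrow> bool) \<Rightarrow> ('c list \<Rightarrow> 'a \<Rightarrow> 'a \<Rightarrow> bool) \<Rightarrow> ('c list \<Rightarrow> 'a \<Rightarrow> bool)
   \<Rightarrow> bool \<Rightarrow> 'c list \<Rightarrow> 'a \<Rightarrow> bool"
  for cstep rstep capt where
  capture: "capt C r \<Longrightarrow> cops_force cstep rstep capt t C r"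
| cop_move: "list_all2 (\<lambda>x y. x = y \<or> cstep x y) C C' \<Longrightarrow>
      cops_force cstep rstep capt False C' r \<Longrightarrow> cops_force cstep rstep capt True C r"
| robber_move: "\<forall>r'. (r' = r \<or> rstep C r r') \<longrightarrow> cops_force cstep rstep capt True C r' \<Longrightarrow>
      cops_force cstep rstep capt False C r"

definition game_number ::
  "'a set \<Rightarrow> 'c set \<Rightarrow> ('c \<Rightarrow> 'c \<Rightarrow> bool) \<Rightarrow> ('c list \<Rightarrow> 'a \<Rightarrow> 'a \<Rightarrow> bool)
   \<Rightarrow> ('c list \<Rightarrow> 'a \<Rightarrow> bool) \<Rightarrow> nat" where
  "game_number V P cstep rstep capt =
     (LEAST k. \<exists>C. length C = k \<and> set C \<subseteq> P \<and>
        (\<forall>r\<in>V. cops_force cstep rstep capt True C r))"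

definition cV :: "'a set \<Rightarrow> ('a \<Rightarrow> 'a \<Rightarrow> bool) \<Rightarrow> nat" where
  "cV V adj = game_number V V
     (\<lambda>x y. y \<in> V \<and> adj x y)
     (\<lambda>C r r'. r' \<in> V \<and> adj r r')
     (\<lambda>C r. \<forall>v\<in>V. adj r v \<longrightarrow> v \<in> set C)"

definition cE :: "'a set \<Rightarrow> ('a \<Rightarrow> 'a \<Rightarrow> bool) \<Rightarrow> nat" where
  "cE V adj = game_number V (graph_edges V adj)
     (\<lambda>e f. f \<in> graph_edges V adj \<and> e \<inter> f \<noteq> {})
     (\<lambda>C r r'. r' \<in> V \<and> adj r r')
     (\<lambda>C r. \<forall>e\<in>graph_edges V adj. r \<in> e \<longrightarrow> e \<in> set C)"

definition cEr :: "'a set \<Rightarrow> ('a \<Rightarrow> 'a \<Rightarrow> bool) \<Rightarrow> nat" where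
  "cEr V adj = game_number V (graph_edges V adj)
     (\<lambda>e f. f \<in> graph_edges V adj \<and> e \<inter> f \<noteq> {})
     (\<lambda>C r r'. r' \<in> V \<and> adj r r' \<and> {r, r'} \<notin> set C)
     (\<lambda>C r. \<forall>e\<in>graph_edges V adj. r \<in> e \<longrightarrow> e \<in> set C)"

end

theory Submission
  imports Defs
begin


lemma robber_safe:
  assumes step: "\<And>C C' r. Inv C r \<Longrightarrow> list_all2 (\<lambda>x y. x = y \<or> cstep x y) C C'
     \<Longrightarrow> \<not> capt C' r \<and> (\<exists>r'. (r' = r \<or> rstep C' r r') \<and> Inv C' r')"
  shows "cops_force cstep rstep capt t C r \<Longrightarrow>
     (if t then Inv C r else (\<exists>C0. list_all2 (\<lambda>x y. x = y \<or> cstep x y) C0 C \<and> Inv C0 r)) \<Longrightarrow> False"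
proof (induction rule: cops_force.induct)
  case (capture C r t)
  show ?case
  proof (cases t)
    case True
    then have "Inv C r" using capture by simp
    moreover have "list_all2 (\<lambda>x y. x = y \<or> cstep x y) C C" by (simp add: list_all2_same)
    ultimately show False using step capture by blast
  next
    case False
    then show False using capture step by auto
  qed
next
  case (cop_move C C' r)
  then show ?case by auto
next
  case (robber_move r C)
  then obtain C0 where "list_all2 (\<lambda>x y. x = y \<or> cstep x y) C0 C" "Inv C0 r" by auto
  then obtain r' where "(r' = r \<or> rstep C r r')" "Inv C r'" using step by blast
  then show False using robber_move by auto
qed

lemma vertex_capt:
  "cops_force cstep rstep capt t C r \<Longrightarrow> \<exists>C'. length C' = length C \<and> capt C' r"
proof (induction rule: cops_force.induct)
  case (cop_move C C' r)
  then show ?case using list_all2_lengthD by metis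
qed auto



abbreviation "VV n \<equiv> line_verts (Kn_verts n) Kn_adj"
abbreviation "PP n \<equiv> graph_edges (VV n) line_adj"

lemma VV_iff: "e \<in> VV n \<longleftrightarrow> (\<exists>u v. e = {u,v} \<and> u<n \<and> v<n \<and> u\<noteq>v)"
  by (auto simp: line_verts_def graph_edges_def Kn_verts_def Kn_adj_def)

lemma VV_pair[simp]: "{u,v} \<in> VV n \<longleftrightarrow> u<n \<and> v<n \<and> u\<noteq>v"
  unfolding VV_iff by (auto simp: doubleton_eq_iff)

lemma VV_elem: "r \<in> VV n \<Longrightarrow> a \<in> r \<Longrightarrow> \<exists>b. r = {a,b} \<and> a \<noteq> b \<and> a < n \<and> b < n"
  unfolding VV_iff by auto

lemma PP_iff: "p \<in> PP n \<longleftrightarrow> (\<exists>e f. p = {e,f} \<and> e \<in> VV n \<and> f \<in> VV n \<and> e \<noteq> f \<and> e \<inter> f \<noteq> {})"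
  unfolding graph_edges_def line_adj_def by blast

lemma finite_VV: "finite (VV n)"
proof -
  have "VV n \<subseteq> Pow {..<n}" by (force simp: VV_iff)
  then show ?thesis by (rule finite_subset) auto
qed

lemma finite_PP: "finite (PP n)"
proof -
  have "PP n \<subseteq> Pow (VV n)" by (force simp: PP_iff)
  then show ?thesis using finite_VV by (rule finite_subset[OF _ finite_Pow_iff[THEN iffD2]])
qed

lemma PP_union: assumes "p \<in> PP n" shows "\<Union>p \<subseteq> {..<n} \<and> card (\<Union>p) \<le> 3"
proof -
  obtain e f where p: "p = {e,f}" "e \<in> VV n" "f \<in> VV n" "e \<noteq> f" "e \<inter> f \<noteq> {}"
    using assms unfolding PP_iff by blast
  obtain c where c: "c \<in> e" "c \<in> f" using p(5) by blast
  obtain x where x: "e = {c,x}" "c<n" "x<n" using VV_elem[OF p(2) c(1)] by blast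
  obtain y where y: "f = {c,y}" "y<n" using VV_elem[OF p(3) c(2)] by blast
  have "\<Union>p = {c,x,y}" using p x y by auto
  moreover have "card {c,x,y} \<le> 3" by (simp add: card_insert_if)
  ultimately show ?thesis using x y by auto
qed

definition tau :: "'a set set list \<Rightarrow> 'a \<Rightarrow> nat" where
  "tau C a = card {i. i < length C \<and> a \<in> \<Union>(C!i)}"

lemma tau_sum: "tau C a = (\<Sum>i<length C. if a \<in> \<Union>(C!i) then 1 else 0)"
proof -
  have "{i. i < length C \<and> a \<in> \<Union>(C!i)} = {i\<in>{..<length C}. a \<in> \<Union>(C!i)}" by auto
  then show ?thesis unfolding tau_def by (simp add: sum.If_cases Int_def)
qed

lemma tau_total:
  assumes "set C \<subseteq> PP n"
  shows "(\<Sum>v<n. tau C v) \<le> 3 * length C"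
proof -
  have "(\<Sum>v<n. tau C v) = (\<Sum>i<length C. \<Sum>v<n. (if v \<in> \<Union>(C!i) then 1 else 0))"
    unfolding tau_sum by (rule sum.swap)
  also have "\<dots> \<le> (\<Sum>i<length C. 3)"
  proof (rule sum_mono)
    fix i assume "i \<in> {..<length C}"
    then have "C!i \<in> PP n" using assms nth_mem by auto
    then have u: "\<Union>(C!i) \<subseteq> {..<n}" "card (\<Union>(C!i)) \<le> 3" using PP_union by blast+
    have "(\<Sum>v<n. (if v \<in> \<Union>(C!i) then 1 else 0::nat)) = card ({..<n} \<inter> \<Union>(C!i))"
      by (simp add: sum.If_cases Int_def Union_eq)
    also have "\<dots> = card (\<Union>(C!i))" using u by (simp add: Int_absorb1)
    finally show "(\<Sum>v<n. (if v \<in> \<Union>(C!i) then 1 else 0::nat)) \<le> 3" using u by simp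
  qed
  finally show ?thesis by simp
qed

lemma heavy_count:
  assumes "set C \<subseteq> PP n"
  shows "h * card {v. v<n \<and> h \<le> tau C v} \<le> 3 * length C"
proof -
  let ?H = "{v. v<n \<and> h \<le> tau C v}"
  have "h * card ?H = (\<Sum>v\<in>?H. h)" by simp
  also have "\<dots> \<le> (\<Sum>v\<in>?H. tau C v)" by (rule sum_mono) auto
  also have "\<dots> \<le> (\<Sum>v<n. tau C v)" by (rule sum_mono2) auto
  also have "\<dots> \<le> 3 * length C" by (rule tau_total[OF assms])
  finally show ?thesis .
qed

lemma light_exists:
  assumes "set C \<subseteq> PP n" "3 * length C < h * n"
  shows "\<exists>v<n. tau C v < h"
proof (rule ccontr)
  assume "\<not> ?thesis"
  then have "{v. v<n \<and> h \<le> tau C v} = {..<n}" by force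
  then show False using heavy_count[OF assms(1), of h] assms(2) by simp
qed

lemma tau_ge:
  assumes mv: "list_all2 (\<lambda>x y. x = y \<or> (y \<in> Q \<and> x \<inter> y \<noteq> {})) C C'"
    and F: "F \<subseteq> set C'" "\<forall>f\<in>F. \<forall>e\<in>f. a \<in> e" "\<forall>f\<in>F. f \<noteq> {}"
  shows "card F \<le> tau C a"
proof -
  let ?I = "{i. i < length C \<and> a \<in> \<Union>(C!i)}"
  have len: "length C = length C'" using mv list_all2_lengthD by blast
  have "F \<subseteq> (\<lambda>i. C'!i) ` ?I"
  proof
    fix f assume fF: "f \<in> F"
    then obtain i where i: "i < length C'" "C'!i = f" using F(1) by (meson in_set_conv_nth subsetD)
    have rel: "C!i = f \<or> C!i \<inter> f \<noteq> {}" using mv i len by (auto simp: list_all2_conv_all_nth)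
    have "a \<in> \<Union>(C!i)"
    proof (cases "C!i = f")
      case True
      obtain e where "e \<in> f" using F(3) fF by blast
      then show ?thesis using True F(2) fF by blast
    next
      case False
      then obtain e where "e \<in> C!i" "e \<in> f" using rel by blast
      then show ?thesis using F(2) fF by blast
    qed
    then show "f \<in> (\<lambda>i. C'!i) ` ?I" using i len by auto
  qed
  then have "card F \<le> card ((\<lambda>i. C'!i) ` ?I)" by (rule card_mono[rotated]) auto
  also have "\<dots> \<le> card ?I" by (rule card_image_le) auto
  finally show ?thesis unfolding tau_def .
qed



lemma cherry_facts:
  assumes r: "r \<in> VV n" "a \<in> r" and L: "L \<subseteq> {..<n} - r"
  shows "(\<lambda>z. {r,{a,z}}) ` L \<subseteq> PP n" "card ((\<lambda>z. {r,{a,z}}) ` L) = card L"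
    "\<forall>f\<in>(\<lambda>z. {r,{a,z}}) ` L. \<forall>e\<in>f. a \<in> e" "\<forall>f\<in>(\<lambda>z. {r,{a,z}}) ` L. f \<noteq> {}"
proof -
  obtain b where b: "r = {a,b}" "a \<noteq> b" "a < n" "b < n" using VV_elem[OF r] by blast
  show "(\<lambda>z. {r,{a,z}}) ` L \<subseteq> PP n"
  proof
    fix f assume "f \<in> (\<lambda>z. {r,{a,z}}) ` L"
    then obtain z where z: "z \<in> L" "f = {r,{a,z}}" by blast
    have "z < n" "z \<noteq> a" "z \<noteq> b" using z L b by auto
    then have "{a,z} \<in> VV n" "r \<noteq> {a,z}" "r \<inter> {a,z} \<noteq> {}" using b by (auto simp: doubleton_eq_iff)
    then show "f \<in> PP n" unfolding PP_iff using z r by blast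
  qed
  have "inj_on (\<lambda>z. {r,{a,z}}) L"
  proof (rule inj_onI)
    fix z z' assume zz: "z \<in> L" "z' \<in> L" "{r,{a,z}} = {r,{a,z'}}"
    have "z \<notin> r" "z' \<notin> r" using zz L by auto
    then have "{a,z} \<noteq> r" "{a,z'} \<noteq> r" by auto
    then have "{a,z} = {a,z'}" using zz(3) by (auto simp: doubleton_eq_iff)
    then show "z = z'" using \<open>z \<notin> r\<close> \<open>z' \<notin> r\<close> r(2) by (auto simp: doubleton_eq_iff)
  qed
  then show "card ((\<lambda>z. {r,{a,z}}) ` L) = card L" by (rule card_image)
  show "\<forall>f\<in>(\<lambda>z. {r,{a,z}}) ` L. \<forall>e\<in>f. a \<in> e" using r by auto
  show "\<forall>f\<in>(\<lambda>z. {r,{a,z}}) ` L. f \<noteq> {}" by auto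
qed


lemma card_rest: assumes "r \<in> VV n" shows "card ({..<n} - r) = n - 2"
proof -
  obtain a b where "r = {a,b}" "a<n" "b<n" "a\<noteq>b" using assms by (auto simp: VV_iff)
  then have "r \<subseteq> {..<n}" "card r = 2" by auto
  then show ?thesis by (simp add: card_Diff_subset finite_subset)
qed

abbreviation mv :: "nat \<Rightarrow> nat set set list \<Rightarrow> nat set set list \<Rightarrow> bool" where
  "mv n C C' \<equiv> list_all2 (\<lambda>x y. x = y \<or> (y \<in> PP n \<and> x \<inter> y \<noteq> {})) C C'"

lemma mv_props:
  assumes "mv n C C'" "set C \<subseteq> PP n"
  shows "set C' \<subseteq> PP n" "length C' = length C"
proof -
  have L: "length C = length C'" and R: "\<forall>i<length C. C!i = C'!i \<or> (C'!i \<in> PP n \<and> C!i \<inter> C'!i \<noteq> {})"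
    using assms(1) unfolding list_all2_conv_all_nth by blast+
  show "length C' = length C" using L by simp
  show "set C' \<subseteq> PP n"
  proof
    fix y assume "y \<in> set C'"
    then obtain i where i: "i < length C'" "C'!i = y" by (meson in_set_conv_nth)
    then have "C!i = y \<or> y \<in> PP n" using R L by metis
    moreover have "C!i \<in> PP n" using i L assms(2) nth_mem by (metis subsetD)
    ultimately show "y \<in> PP n" by metis
  qed
qed

definition Inv :: "nat \<Rightarrow> nat \<Rightarrow> nat \<Rightarrow> nat set set list \<Rightarrow> nat set \<Rightarrow> bool" where
  "Inv h k n C r = (r \<in> VV n \<and> set C \<subseteq> PP n \<and> length C = k \<and> (\<exists>a\<in>r. tau C a < h))"

lemma initial:
  assumes "set C \<subseteq> PP n" "length C = k" "3 * k < h * n" "n \<ge> 2"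
  shows "\<exists>r\<in>VV n. Inv h k n C r"
proof -
  have "3 * length C < h * n" using assms(2,3) by simp
  then obtain l where l: "l < n" "tau C l < h" using light_exists[OF assms(1)] by blast
  define l' where "l' = (if l = 0 then 1 else 0::nat)"
  have "l' < n" "l' \<noteq> l" using assms(4) l by (auto simp: l'_def)
  then have "{l,l'} \<in> VV n" using l by auto
  then show ?thesis unfolding Inv_def using assms l by blast
qed

lemma no_capt:
  assumes r: "r \<in> VV n" "a \<in> r" and t: "tau C a < n - 2" and m: "mv n C C'"
  shows "\<not> (\<forall>e\<in>PP n. r \<in> e \<longrightarrow> e \<in> set C')"
proof
  assume cap: "\<forall>e\<in>PP n. r \<in> e \<longrightarrow> e \<in> set C'"
  let ?F = "(\<lambda>z. {r,{a,z}}) ` ({..<n} - r)"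
  note cf = cherry_facts[OF r, of "{..<n} - r"]
  have "?F \<subseteq> set C'" using cap cf(1) by auto
  then have "card ?F \<le> tau C a" using tau_ge[OF m _ cf(3) cf(4)] by blast
  then show False using cf(2) card_rest[OF r(1)] t by simp
qed


lemma step_E:
  assumes inv: "Inv h k n C r" and h: "h \<le> n - 2" "3 * k < h * n" and m: "mv n C C'"
  shows "\<not> (\<forall>e\<in>PP n. r \<in> e \<longrightarrow> e \<in> set C') \<and>
     (\<exists>r'. (r' = r \<or> (r' \<in> VV n \<and> line_adj r r')) \<and> Inv h k n C' r')"
proof -
  from inv obtain a where r: "r \<in> VV n" "a \<in> r" "tau C a < h" and C: "set C \<subseteq> PP n" "length C = k"
    unfolding Inv_def by blast
  have C': "set C' \<subseteq> PP n" "length C' = k" using mv_props[OF m C(1)] C by auto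
  have nc: "\<not> (\<forall>e\<in>PP n. r \<in> e \<longrightarrow> e \<in> set C')" using no_capt[OF r(1,2) _ m] r(3) h by simp
  obtain l where l: "l < n" "tau C' l < h" using light_exists[OF C'(1)] C' h by auto
  obtain b where b: "r = {a,b}" "a \<noteq> b" "a < n" "b < n" using VV_elem[OF r(1,2)] by blast
  show ?thesis
  proof (cases "l \<in> r")
    case True
    then have "Inv h k n C' r" unfolding Inv_def using r C' l by blast
    then show ?thesis using nc by blast
  next
    case False
    then have "l \<noteq> a" "l \<noteq> b" using b by auto
    then have "{a,l} \<in> VV n" "line_adj r {a,l}" using b l by (auto simp: line_adj_def doubleton_eq_iff)
    moreover have "Inv h k n C' {a,l}" unfolding Inv_def using C' l \<open>{a,l} \<in> VV n\<close> by blast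
    ultimately show ?thesis using nc by blast
  qed
qed

lemma step_Er:
  assumes inv: "Inv h k n C r" and h: "h \<le> n - 2" "3 * k < h * (n + 1 - h)" and m: "mv n C C'"
  shows "\<not> (\<forall>e\<in>PP n. r \<in> e \<longrightarrow> e \<in> set C') \<and>
     (\<exists>r'. (r' = r \<or> (r' \<in> VV n \<and> line_adj r r' \<and> {r, r'} \<notin> set C')) \<and> Inv h k n C' r')"
proof -
  from inv obtain a where r: "r \<in> VV n" "a \<in> r" "tau C a < h" and C: "set C \<subseteq> PP n" "length C = k"
    unfolding Inv_def by blast
  have C': "set C' \<subseteq> PP n" "length C' = k" using mv_props[OF m C(1)] C by auto
  have nc: "\<not> (\<forall>e\<in>PP n. r \<in> e \<longrightarrow> e \<in> set C')" using no_capt[OF r(1,2) _ m] r(3) h by simp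
  obtain b where b: "r = {a,b}" "a \<noteq> b" "a < n" "b < n" using VV_elem[OF r(1,2)] by blast
  show ?thesis
  proof (cases "\<exists>c\<in>r. tau C' c < h")
    case True
    then have "Inv h k n C' r" unfolding Inv_def using r C' by blast
    then show ?thesis using nc by blast
  next
    case False
    let ?L = "{v. v < n \<and> tau C' v < h}"
    let ?H = "{v. v < n \<and> h \<le> tau C' v}"
    have Lr: "?L \<subseteq> {..<n} - r" using False by auto
    have "?L \<union> ?H = {..<n}" "?L \<inter> ?H = {}" by auto
    then have "card ?L + card ?H = n"
      by (metis card_Un_disjoint card_lessThan finite_Un finite_lessThan)
    moreover have "h * card ?H \<le> 3 * k" using heavy_count[OF C'(1), of h] C' by simp
    ultimately have "h * card ?H < h * (n + 1 - h)" using h by linarith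
    then have "card ?H < n + 1 - h" by (metis mult_less_cancel1)
    then have cardL: "h \<le> card ?L" using h \<open>card ?L + card ?H = n\<close> by linarith
    have "\<exists>l\<in>?L. {r,{a,l}} \<notin> set C'"
    proof (rule ccontr)
      assume "\<not> ?thesis"
      then have sub: "(\<lambda>z. {r,{a,z}}) ` ?L \<subseteq> set C'" by auto
      note cf = cherry_facts[OF r(1,2) Lr]
      have "card ((\<lambda>z. {r,{a,z}}) ` ?L) \<le> tau C a" using tau_ge[OF m sub cf(3) cf(4)] .
      then show False using cf(2) cardL r(3) by simp
    qed
    then obtain l where l: "l < n" "tau C' l < h" "{r,{a,l}} \<notin> set C'" by blast
    then have "l \<notin> r" using False by auto
    then have "l \<noteq> a" "l \<noteq> b" using b by auto
    then have "{a,l} \<in> VV n" "line_adj r {a,l}" using b l by (auto simp: line_adj_def doubleton_eq_iff)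
    moreover have "Inv h k n C' {a,l}" unfolding Inv_def using C' l \<open>{a,l} \<in> VV n\<close> by blast
    ultimately show ?thesis using nc l(3) by blast
  qed
qed


lemma nbr_char:
  assumes "r = {a,b}" "a \<noteq> b" "v \<in> VV n" "line_adj r v"
  shows "\<exists>x<n. x \<noteq> a \<and> x \<noteq> b \<and> (v = {a,x} \<or> v = {b,x})"
proof -
  obtain p q where v: "v = {p,q}" "p<n" "q<n" "p\<noteq>q" using assms(3) by (auto simp: VV_iff)
  have "v \<noteq> r" "v \<inter> r \<noteq> {}" using assms(4) unfolding line_adj_def by auto
  then show ?thesis using v assms(1,2) by (auto simp: doubleton_eq_iff insert_commute)
qed

lemma nbr_card:
  assumes "r \<in> VV n"
  shows "2 * (n - 2) \<le> card {v \<in> VV n. line_adj r v}"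
proof -
  obtain a b where r: "r = {a,b}" "a<n" "b<n" "a\<noteq>b" using assms by (auto simp: VV_iff)
  let ?X = "{..<n} - r"
  have cX: "card ?X = n - 2" using card_rest[OF assms] .
  have ia: "inj_on (\<lambda>z. {a,z}) ?X" by (rule inj_onI) (auto simp: doubleton_eq_iff r)
  have ib: "inj_on (\<lambda>z. {b,z}) ?X" by (rule inj_onI) (auto simp: doubleton_eq_iff r)
  have disj: "(\<lambda>z. {a,z}) ` ?X \<inter> (\<lambda>z. {b,z}) ` ?X = {}" using r by (auto simp: doubleton_eq_iff)
  have sub: "(\<lambda>z. {a,z}) ` ?X \<union> (\<lambda>z. {b,z}) ` ?X \<subseteq> {v \<in> VV n. line_adj r v}"
    using r by (auto simp: line_adj_def doubleton_eq_iff)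
  have fin: "finite {v \<in> VV n. line_adj r v}" using finite_VV by simp
  have "card ((\<lambda>z. {a,z}) ` ?X \<union> (\<lambda>z. {b,z}) ` ?X) = 2 * (n - 2)"
    using card_Un_disjoint[OF _ _ disj] card_image[OF ia] card_image[OF ib] cX by simp
  then show ?thesis using card_mono[OF fin sub] by simp
qed

lemma list_all2_maps: "(\<forall>y\<in>set xs. P (f y) (g y)) \<Longrightarrow> list_all2 P (map f xs) (map g xs)"
  by (induction xs) auto

definition C0 :: "nat \<Rightarrow> nat set list" where
  "C0 n = map (\<lambda>y. {0,y}) [1..<n-1] @ map (\<lambda>y. {0,y}) [1..<n-1]"

lemma C0_props: "n \<ge> 3 \<Longrightarrow> length (C0 n) = 2 * (n - 2) \<and> set (C0 n) \<subseteq> VV n"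
  unfolding C0_def by auto

abbreviation okV where "okV n x y \<equiv> x = y \<or> (y \<in> VV n \<and> line_adj x y)"

lemma win_move_gen:
  assumes "\<forall>y\<in>{1..<n-1}. okV n {0,y} (f y) \<and> okV n {0,y} (g y)"
    and "\<forall>v\<in>VV n. line_adj r v \<longrightarrow> (\<exists>y\<in>{1..<n-1}. v = f y \<or> v = g y)"
  shows "\<exists>C'. list_all2 (\<lambda>x y. x = y \<or> (y \<in> VV n \<and> line_adj x y)) (C0 n) C' \<and>
           (\<forall>v\<in>VV n. line_adj r v \<longrightarrow> v \<in> set C')"
proof (intro exI conjI)
  let ?C = "map f [1..<n-1] @ map g [1..<n-1]"
  show "list_all2 (\<lambda>x y. x = y \<or> (y \<in> VV n \<and> line_adj x y)) (C0 n) ?C"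
    unfolding C0_def by (rule list_all2_appendI; rule list_all2_maps) (use assms(1) in auto)
  show "\<forall>v\<in>VV n. line_adj r v \<longrightarrow> v \<in> set ?C" using assms(2) by force
qed


lemma win_move:
  assumes n: "n \<ge> 3" and r: "r \<in> VV n"
  shows "\<exists>C'. list_all2 (\<lambda>x y. x = y \<or> (y \<in> VV n \<and> line_adj x y)) (C0 n) C' \<and>
           (\<forall>v\<in>VV n. line_adj r v \<longrightarrow> v \<in> set C')"
proof (cases "0 \<in> r")
  case True
  obtain b where b: "r = {0,b}" "0 \<noteq> b" "b < n" using VV_elem[OF r True] by blast
  let ?f = "\<lambda>y. if y = b then {0,n-1} else {0::nat,y}"
  let ?g = "\<lambda>y. if y = b then {b,n-1} else {b,y}"
  show ?thesis
  proof (rule win_move_gen[where f="?f" and g="?g"])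
    show "\<forall>y\<in>{1..<n-1}. okV n {0,y} (?f y) \<and> okV n {0,y} (?g y)"
      using b n by (auto simp: line_adj_def doubleton_eq_iff)
    show "\<forall>v\<in>VV n. line_adj r v \<longrightarrow> (\<exists>y\<in>{1..<n-1}. v = ?f y \<or> v = ?g y)"
    proof (intro ballI impI)
      fix v assume "v \<in> VV n" "line_adj r v"
      then obtain x where x: "x<n" "x \<noteq> 0" "x \<noteq> b" "v = {0,x} \<or> v = {b,x}"
        using nbr_char[OF b(1,2)] by blast
      show "\<exists>y\<in>{1..<n-1}. v = ?f y \<or> v = ?g y"
      proof (cases "x = n - 1")
        case True
        then have "b \<in> {1..<n-1}" using x b by auto
        moreover have "v = ?f b \<or> v = ?g b" using x True by simp
        ultimately show ?thesis by blast
      next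
        case False
        then have "x \<in> {1..<n-1}" using x by auto
        moreover have "v = ?f x \<or> v = ?g x" using x by auto
        ultimately show ?thesis by blast
      qed
    qed
  qed
next
  case False
  note r0 = False
  show ?thesis
  proof (cases "n - 1 \<in> r")
    case True
    obtain a where a: "r = {n-1,a}" "n-1 \<noteq> a" "a < n" using VV_elem[OF r True] by blast
    have a0: "a \<noteq> 0" using a r0 by auto
    let ?f = "\<lambda>y. if y = a then {0,a} else {a,y}"
    let ?g = "\<lambda>y. if y = a then {0,n-1} else {n-1,y}"
    show ?thesis
    proof (rule win_move_gen[where f="?f" and g="?g"])
      show "\<forall>y\<in>{1..<n-1}. okV n {0,y} (?f y) \<and> okV n {0,y} (?g y)"
        using a a0 n by (auto simp: line_adj_def doubleton_eq_iff)
      show "\<forall>v\<in>VV n. line_adj r v \<longrightarrow> (\<exists>y\<in>{1..<n-1}. v = ?f y \<or> v = ?g y)"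
      proof (intro ballI impI)
        fix v assume "v \<in> VV n" "line_adj r v"
        then obtain x where x: "x<n" "x \<noteq> n-1" "x \<noteq> a" "v = {n-1,x} \<or> v = {a,x}"
          using nbr_char[OF a(1,2)] by blast
        show "\<exists>y\<in>{1..<n-1}. v = ?f y \<or> v = ?g y"
        proof (cases "x = 0")
          case True
          then have "a \<in> {1..<n-1}" using a a0 by auto
          moreover have "v = ?f a \<or> v = ?g a" using x True by (auto simp: insert_commute)
          ultimately show ?thesis by blast
        next
          case False
          then have "x \<in> {1..<n-1}" using x by auto
          moreover have "v = ?f x \<or> v = ?g x" using x by auto
          ultimately show ?thesis by blast
        qed
      qed
    qed
  next
    case False
    obtain a b where ab: "r = {a,b}" "a \<noteq> b" "a < n" "b < n" using r by (auto simp: VV_iff)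
    have ab1: "a \<noteq> 0" "b \<noteq> 0" "a \<noteq> n-1" "b \<noteq> n-1" using ab r0 False by auto
    let ?f = "\<lambda>y. if y = a \<or> y = b then {0,y} else {a,y}"
    let ?g = "\<lambda>y. if y = a then {a,n-1} else if y = b then {b,n-1} else {b,y}"
    show ?thesis
    proof (rule win_move_gen[where f="?f" and g="?g"])
      show "\<forall>y\<in>{1..<n-1}. okV n {0,y} (?f y) \<and> okV n {0,y} (?g y)"
        using ab ab1 n by (auto simp: line_adj_def doubleton_eq_iff)
      show "\<forall>v\<in>VV n. line_adj r v \<longrightarrow> (\<exists>y\<in>{1..<n-1}. v = ?f y \<or> v = ?g y)"
      proof (intro ballI impI)
        fix v assume "v \<in> VV n" "line_adj r v"
        then obtain x where x: "x<n" "x \<noteq> a" "x \<noteq> b" "v = {a,x} \<or> v = {b,x}"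
          using nbr_char[OF ab(1,2)] by blast
        have ain: "a \<in> {1..<n-1}" "b \<in> {1..<n-1}" using ab ab1 by auto
        show "\<exists>y\<in>{1..<n-1}. v = ?f y \<or> v = ?g y"
        proof (cases "x = 0 \<or> x = n - 1")
          case True
          have "(v = ?f a \<or> v = ?g a) \<or> (v = ?f b \<or> v = ?g b)"
          proof (cases "v = {a,x}")
            case True
            then have "v = ?f a \<or> v = ?g a" using \<open>x = 0 \<or> x = n - 1\<close> by (auto simp: insert_commute)
            then show ?thesis by blast
          next
            case False
            then have "v = {b,x}" using x by blast
            then have "v = ?f b \<or> v = ?g b" using \<open>x = 0 \<or> x = n - 1\<close> ab(2) by (auto simp: insert_commute)
            then show ?thesis by blast
          qed
          then show ?thesis using ain by blast
        next
          case False
          then have "x \<in> {1..<n-1}" using x by auto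
          moreover have "v = ?f x \<or> v = ?g x" using x by auto
          ultimately show ?thesis by blast
        qed
      qed
    qed
  qed
qed


lemma cV_val:
  assumes n: "n \<ge> 3"
  shows "cV (VV n) line_adj = 2 * (n - 2)"
proof -
  let ?cs = "\<lambda>x y. y \<in> VV n \<and> line_adj x y"
  let ?rs = "\<lambda>(C::nat set list) r r'. r' \<in> VV n \<and> line_adj r r'"
  let ?cp = "\<lambda>C r. \<forall>v\<in>VV n. line_adj r v \<longrightarrow> v \<in> set C"
  have win: "\<forall>r\<in>VV n. cops_force ?cs ?rs ?cp True (C0 n) r"
  proof
    fix r assume "r \<in> VV n"
    then obtain C' where C': "list_all2 (\<lambda>x y. x = y \<or> ?cs x y) (C0 n) C'" "?cp C' r"
      using win_move[OF n] by blast
    have "cops_force ?cs ?rs ?cp False C' r" by (rule cops_force.capture) (use C'(2) in simp)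
    then show "cops_force ?cs ?rs ?cp True (C0 n) r" by (rule cops_force.cop_move[OF C'(1)])
  qed
  have low: "2 * (n - 2) \<le> k"
    if W: "\<exists>C. length C = k \<and> set C \<subseteq> VV n \<and> (\<forall>r\<in>VV n. cops_force ?cs ?rs ?cp True C r)" for k
  proof -
    obtain C where C: "length C = k" "\<forall>r\<in>VV n. cops_force ?cs ?rs ?cp True C r" using W by blast
    have r01: "{0,1} \<in> VV n" using n by simp
    have cf: "cops_force ?cs ?rs ?cp True C {0,1}" using C(2) r01 by (rule bspec)
    obtain C' where C': "length C' = length C" "?cp C' {0,1}" using vertex_capt[OF cf] by blast
    have "{v \<in> VV n. line_adj {0,1} v} \<subseteq> set C'" using C'(2) by blast
    then have "card {v \<in> VV n. line_adj {0,1} v} \<le> card (set C')" by (rule card_mono[rotated]) simp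
    also have "\<dots> \<le> length C'" by (rule card_length)
    finally show ?thesis using nbr_card[OF r01] C(1) C'(1) by simp
  qed
  have W0: "\<exists>C. length C = 2 * (n - 2) \<and> set C \<subseteq> VV n \<and> (\<forall>r\<in>VV n. cops_force ?cs ?rs ?cp True C r)"
    using win C0_props[OF n] by blast
  show ?thesis unfolding cV_def game_number_def by (rule Least_equality, rule W0, erule low)
qed

lemma W_least:
  fixes rs :: "nat set set list \<Rightarrow> nat set \<Rightarrow> nat set \<Rightarrow> bool"
  shows "\<exists>C. length C = game_number (VV n) (PP n) (\<lambda>e f. f \<in> PP n \<and> e \<inter> f \<noteq> {}) rs
            (\<lambda>C r. \<forall>e\<in>PP n. r \<in> e \<longrightarrow> e \<in> set C) \<and> set C \<subseteq> PP n \<and>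
     (\<forall>r\<in>VV n. cops_force (\<lambda>e f. f \<in> PP n \<and> e \<inter> f \<noteq> {}) rs (\<lambda>C r. \<forall>e\<in>PP n. r \<in> e \<longrightarrow> e \<in> set C) True C r)"
proof -
  let ?cs = "\<lambda>e f. f \<in> PP n \<and> e \<inter> f \<noteq> {}"
  let ?cp = "\<lambda>C r. \<forall>e\<in>PP n. r \<in> e \<longrightarrow> e \<in> set C"
  let ?W = "\<lambda>k. \<exists>C. length C = k \<and> set C \<subseteq> PP n \<and> (\<forall>r\<in>VV n. cops_force ?cs rs ?cp True C r)"
  obtain xs where xs: "set xs = PP n" using finite_list[OF finite_PP] by blast
  have "?W (length xs)" using xs by (auto intro: cops_force.capture)
  then have "?W (LEAST k. ?W k)" by (rule LeastI)
  then show ?thesis unfolding game_number_def .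
qed

lemma cE_bound:
  assumes n: "n \<ge> 3"
  shows "n * (n - 2) \<le> 3 * cE (VV n) line_adj"
proof -
  let ?cs = "\<lambda>e f. f \<in> PP n \<and> e \<inter> f \<noteq> {}"
  let ?rs = "\<lambda>(C::nat set set list) r r'. r' \<in> VV n \<and> line_adj r r'"
  let ?cp = "\<lambda>C r. \<forall>e\<in>PP n. r \<in> e \<longrightarrow> e \<in> set C"
  obtain C where C: "length C = cE (VV n) line_adj" "set C \<subseteq> PP n"
     "\<forall>r\<in>VV n. cops_force ?cs ?rs ?cp True C r"
    using W_least[of n ?rs] unfolding cE_def by blast
  let ?k = "length C"
  show ?thesis
  proof (rule ccontr)
    assume "\<not> ?thesis"
    then have lt: "3 * ?k < (n-2) * n" using C(1) by (simp add: mult.commute)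
    obtain r where r: "r \<in> VV n" "Inv (n-2) ?k n C r" using initial[OF C(2) refl lt] n by auto
    have st: "\<And>C C' r. Inv (n-2) ?k n C r \<Longrightarrow> mv n C C' \<Longrightarrow> \<not> (\<forall>e\<in>PP n. r \<in> e \<longrightarrow> e \<in> set C')
       \<and> (\<exists>r'. (r' = r \<or> (r' \<in> VV n \<and> line_adj r r')) \<and> Inv (n-2) ?k n C' r')"
      using step_E[OF _ le_refl lt] by blast
    from robber_safe[where Inv="Inv (n-2) ?k n", OF st C(3)[rule_format, OF r(1)]] r(2) show False by simp
  qed
qed

lemma cEr_bound:
  assumes n: "n \<ge> 3"
  shows "n^2 \<le> 12 * cEr (VV n) line_adj"
proof -
  let ?cs = "\<lambda>e f. f \<in> PP n \<and> e \<inter> f \<noteq> {}"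
  let ?rs = "\<lambda>(C::nat set set list) r r'. r' \<in> VV n \<and> line_adj r r' \<and> {r, r'} \<notin> set C"
  let ?cp = "\<lambda>C r. \<forall>e\<in>PP n. r \<in> e \<longrightarrow> e \<in> set C"
  obtain C where C: "length C = cEr (VV n) line_adj" "set C \<subseteq> PP n"
     "\<forall>r\<in>VV n. cops_force ?cs ?rs ?cp True C r"
    using W_least[of n ?rs] unfolding cEr_def by blast
  let ?k = "length C"
  show ?thesis
  proof (rule ccontr)
    assume "\<not> ?thesis"
    then have lt0: "12 * ?k < n^2" using C(1) by simp
    define h where "h = (if n = 3 then 1 else (n + 1) div 2)"
    have h1: "1 \<le> h" "h \<le> n - 2" using n by (auto simp: h_def)
    have lt: "3 * ?k < h * (n + 1 - h)"
    proof (cases "n = 3")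
      case True
      then have "12 * ?k < 9" using lt0 by simp
      then have "?k = 0" by linarith
      then show ?thesis using True by (simp add: h_def)
    next
      case False
      have "n^2 \<le> 4 * (h * (n + 1 - h))"
      proof (cases "even n")
        case True
        then obtain m where m: "n = 2 * m" by blast
        then have hm: "h = m" using False by (simp add: h_def)
        then have "n + 1 - h = m + 1" using m by simp
        then show ?thesis using m hm by (simp add: power2_eq_square algebra_simps)
      next
        case odd: False
        then obtain m where m: "n = 2 * m + 1" using oddE by blast
        then have hm: "h = m + 1" using False by (simp add: h_def)
        then have "n + 1 - h = m + 1" using m by simp
        then show ?thesis using m hm by (simp add: power2_eq_square algebra_simps)
      qed
      then show ?thesis using lt0 by linarith
    qed
    have "h * (n + 1 - h) \<le> h * n" using h1 by simp
    then have lt2: "3 * ?k < h * n" using lt by linarith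
    obtain r where r: "r \<in> VV n" "Inv h ?k n C r" using initial[OF C(2) refl lt2] n by auto
    have st: "\<And>C C' r. Inv h ?k n C r \<Longrightarrow> mv n C C' \<Longrightarrow> \<not> (\<forall>e\<in>PP n. r \<in> e \<longrightarrow> e \<in> set C')
       \<and> (\<exists>r'. (r' = r \<or> (r' \<in> VV n \<and> line_adj r r' \<and> {r, r'} \<notin> set C')) \<and> Inv h ?k n C' r')"
      using step_Er[OF _ h1(2) lt] by blast
    from robber_safe[where Inv="Inv h ?k n", OF st C(3)[rule_format, OF r(1)]] r(2) show False by simp
  qed
qed

theorem lemma4:
  fixes n :: nat
  assumes "n \<ge> 3"
  shows "cV (line_verts (Kn_verts n) Kn_adj) line_adj = 2 * (n - 2)
    \<and> real (cE (line_verts (Kn_verts n) Kn_adj) line_adj) \<ge> real n * (real n - 2) / 3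
    \<and> real (cEr (line_verts (Kn_verts n) Kn_adj) line_adj) \<ge> (real n)^2 / 12"
proof (intro conjI)
  show "cV (line_verts (Kn_verts n) Kn_adj) line_adj = 2 * (n - 2)" using cV_val[OF assms] .
  have e: "real (n - 2) = real n - 2" using assms by (simp add: of_nat_diff)
  have "real (n * (n - 2)) \<le> real (3 * cE (VV n) line_adj)" by (simp only: of_nat_le_iff) (rule cE_bound[OF assms])
  then have "real n * real (n - 2) \<le> 3 * real (cE (VV n) line_adj)" by simp
  then have "real n * (real n - 2) \<le> 3 * real (cE (VV n) line_adj)" by (simp only: e)
  then show "real (cE (line_verts (Kn_verts n) Kn_adj) line_adj) \<ge> real n * (real n - 2) / 3" by linarith
  have "real (n^2) \<le> real (12 * cEr (VV n) line_adj)" by (simp only: of_nat_le_iff) (rule cEr_bound[OF assms])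
  then have "(real n)^2 \<le> 12 * real (cEr (VV n) line_adj)" by simp
  then show "real (cEr (line_verts (Kn_verts n) Kn_adj) line_adj) \<ge> (real n)^2 / 12" by linarith
qed

end
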